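(* Let $\omega(r)=\frac{r^2}{\sin^2r}-1$ (so $\omega(r)\searrow0$ as $r\searrow0$). Then $u(x)=\sin x$ on $(-\pi/4,\pi/4)$ is a Dirichlet $\omega$-minimizer: for every interval $(x-r,x+r)\subset(-\pi/4,\pi/4)$, $$\int_{x-r}^{x+r}(\cos s)^2\,ds\le(1+\omega(r))\int_{x-r}^{x+r}v'(s)^2\,ds,$$ where $v$ is the affine function with $v(x\pm r)=\sin(x\pm r)$ (the Dirichlet minimizer with these boundary values). *)

theory Defs
  imports "HOL-Analysis.Analysis"
begin

definition omega :: "real \<Rightarrow> real" where
  "omega r = r\<^sup>2 / (sin r)\<^sup>2 - 1"

definition affine_interp :: "(real \<Rightarrow> real) \<Rightarrow> real \<Rightarrow> real \<Rightarrow> real \<Rightarrow> real" where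
  "affine_interp u a b s = u a + (u b - u a) / (b - a) * (s - a)"

end

theory Submission
  imports Defs
begin

theorem mainTheorem8:
  fixes x r :: real
  assumes "r > 0" and "- (pi/4) \<le> x - r" and "x + r \<le> pi/4"
  shows "(LBINT s=x-r..x+r. (cos s)\<^sup>2)
           \<le> (1 + omega r) *
             (LBINT s=x-r..x+r. (deriv (affine_interp sin (x-r) (x+r)) s)\<^sup>2)"
proof -
  define a where "a = x - r"
  define b where "b = x + r"
  define c where "c = (sin b - sin a) / (b - a)"
  have ab: "a \<le> b" using assms unfolding a_def b_def by simp
  have dv: "deriv (affine_interp sin a b) s = c" for s
  proof -
    have "((\<lambda>s. sin a + c * (s - a)) has_field_derivative c) (at s)"
      by (auto intro!: derivative_eq_intros)
    moreover have "affine_interp sin a b = (\<lambda>s. sin a + c * (s - a))"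
      by (auto simp: affine_interp_def c_def)
    ultimately show ?thesis using DERIV_imp_deriv by metis
  qed
  have I2: "(LBINT s=a..b. (deriv (affine_interp sin a b) s)\<^sup>2) = c\<^sup>2 * b - c\<^sup>2 * a"
    unfolding dv
    apply (rule interval_integral_FTC_finite[where F="\<lambda>s. c\<^sup>2 * s"])
    apply (auto intro!: derivative_eq_intros continuous_intros
        simp: has_real_derivative_iff_has_vector_derivative[symmetric])
    done
  have D: "((\<lambda>t. t / 2 + sin (2 * t) / 4) has_field_derivative (cos s)\<^sup>2) (at s)" for s :: real
  proof -
    have "((\<lambda>t. t / 2 + sin (2 * t) / 4) has_field_derivative (1/2 + cos (2 * s) * 2 / 4)) (at s)"
      by (auto intro!: derivative_eq_intros)
    moreover have "1/2 + cos (2 * s) * 2 / 4 = (cos s)\<^sup>2"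
      using cos_double_cos[of s] by (simp add: field_simps)
    ultimately show ?thesis by simp
  qed
  have I1: "(LBINT s=a..b. (cos s)\<^sup>2) = (b/2 + sin (2*b)/4) - (a/2 + sin (2*a)/4)"
    apply (rule interval_integral_FTC_finite)
     apply (auto intro!: continuous_intros)
    apply (subst has_real_derivative_iff_has_vector_derivative[symmetric])
    apply (rule has_field_derivative_at_within)
    apply (rule D)
    done
  have sr: "sin r > 0" using assms by (intro sin_gt_zero) (auto simp: pi_gt3)
  have s2: "sin (2*r) \<le> 2*r" using assms by (intro sin_x_le_x) auto
  have c2: "cos (2*x) \<ge> 0" using assms by (intro cos_ge_zero) auto
  have sd: "sin b - sin a = 2 * cos x * sin r"
    unfolding a_def b_def by (simp add: sin_add sin_diff)
  have sd2: "sin (2*b) - sin (2*a) = 2 * cos (2*x) * sin (2*r)"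
    unfolding a_def b_def by (simp add: distrib_left right_diff_distrib sin_add sin_diff)
  have cc: "cos (2*x) = 2 * (cos x)\<^sup>2 - 1" using cos_double_cos[of x] by simp
  have L: "(LBINT s=a..b. (cos s)\<^sup>2) = r + cos (2*x) * sin (2*r) / 2"
    unfolding I1 using sd2 by (simp add: a_def b_def field_simps)
  have R: "(1 + omega r) * (LBINT s=a..b. (deriv (affine_interp sin a b) s)\<^sup>2) = 2 * r * (cos x)\<^sup>2"
    unfolding I2 omega_def c_def sd using sr assms(1)
    by (simp add: a_def b_def field_simps power2_eq_square)
  have "r + cos (2*x) * sin (2*r) / 2 \<le> 2 * r * (cos x)\<^sup>2"
  proof -
    have "cos (2*x) * sin (2*r) \<le> cos (2*x) * (2*r)" using c2 s2 by (simp add: mult_left_mono)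
    moreover have "2 * r * (cos x)\<^sup>2 = r + r * cos (2*x)" unfolding cc by (simp add: algebra_simps)
    moreover have "cos (2*x) * (2*r) = 2 * (r * cos (2*x))" by simp
    ultimately show ?thesis by linarith
  qed
  thus ?thesis using L R by (simp add: a_def b_def)
qed

end
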